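(* Let $X\subset\mathbb{R}$ be a Lebesgue measurable set such that (i) for all $x\in\mathbb{R}$, $x\in X$ if and only if $x+1\in X$; and (ii) for every $k\in\mathbb{Z}$ and every $x\in X$, $kx\in X$. Then either $X$ has Lebesgue measure zero or $\mathbb{R}\setminus X$ has Lebesgue measure zero. *)

theory Defs
  imports "HOL-Analysis.Analysis"
begin

end

theory Submission
  imports Defs "HOL-Analysis.Analysis"
begin

lemma lm_Ico: "{a..<b::real} \<in> lmeasurable"
  by (rule fmeasurableI2[of "{a..b}"]) auto

locale L2 =
  fixes X :: "real set"
  assumes meas: "X \<in> sets lebesgue"
    and per: "\<And>x. x \<in> X \<longleftrightarrow> x + 1 \<in> X"
    and mul: "\<And>(k::int) x. x \<in> X \<Longrightarrow> of_int k * x \<in> X"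
begin

lemma perj: "x \<in> X \<longleftrightarrow> x + of_int j \<in> X"
proof (induction j arbitrary: x rule: int_induct[where k=0])
  case base then show ?case by simp
next
  case (step1 i) then show ?case using per[of "x + of_int i"] by (simp add: add.assoc)
next
  case (step2 i)
  have e: "x + (of_int i - 1) + 1 = x + of_int i" by simp
  show ?case using per[of "x + (of_int i - 1)"] step2(2)[of x] unfolding e by simp
qed

lemma XI_lm: "X \<inter> {a..<b} \<in> lmeasurable"
  using fmeasurable_Int_fmeasurable[OF lm_Ico meas] by (simp add: Int_commute)

lemma transl: "measure lebesgue (X \<inter> {a + of_int j..<b + of_int j}) = measure lebesgue (X \<inter> {a..<b})"
proof -
  have "X \<inter> {a + of_int j..<b + of_int j} = (\<lambda>x. 1 *\<^sub>R x + of_int j) ` (X \<inter> {a..<b})"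
  proof (rule set_eqI, rule iffI)
    fix y assume y: "y \<in> X \<inter> {a + of_int j..<b + of_int j}"
    then have "y - of_int j \<in> X" using perj[of "y - of_int j" j] by simp
    with y show "y \<in> (\<lambda>x. 1 *\<^sub>R x + of_int j) ` (X \<inter> {a..<b})"
      by (intro image_eqI[of _ _ "y - of_int j"]) auto
  qed (auto simp: perj[symmetric])
  then show ?thesis using measure_lebesgue_affine[of 1 "of_int j" "X \<inter> {a..<b}"] by simp
qed

definition c where "c = measure lebesgue (X \<inter> {0..<1})"

lemma c_le: "c \<le> 1" "0 \<le> c"
proof -
  have "c \<le> measure lebesgue {0..<1::real}"
    unfolding c_def by (rule measure_mono_fmeasurable) (auto simp: lm_Ico meas)
  then show "c \<le> 1" by simp
  show "0 \<le> c" unfolding c_def by simp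
qed

lemma unit_int: "measure lebesgue (X \<inter> {of_int j..<of_int j + 1}) = c"
  using transl[of 0 j 1] unfolding c_def by (simp add: add.commute)

lemma dy_le: "measure lebesgue (X \<inter> {of_int j / 2^n..<(of_int j + 1) / 2^n}) \<le> c / 2^n"
proof -
  let ?S = "X \<inter> {of_int j..<of_int j + 1}"
  have sub: "X \<inter> {of_int j / 2^n..<(of_int j + 1) / 2^n} \<subseteq> (\<lambda>y. (1/2^n) *\<^sub>R y + 0) ` ?S"
  proof
    fix x assume x: "x \<in> X \<inter> {of_int j / 2^n..<(of_int j + 1) / 2^n}"
    have "of_int (2^n) * x \<in> X" using mul x by blast
    moreover have "of_int j \<le> 2^n * x" "2^n * x < of_int j + 1"
      using x by (auto simp: field_simps)
    ultimately show "x \<in> (\<lambda>y. (1/2^n) *\<^sub>R y + 0) ` ?S"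
      by (intro image_eqI[of _ _ "2^n * x"]) auto
  qed
  have lm: "(\<lambda>y. (1/2^n) *\<^sub>R y + 0) ` ?S \<in> lmeasurable"
  proof -
    have "(\<lambda>y. (1/2^n) *\<^sub>R y + 0) ` ?S = (*) (1/2^n) ` ?S" by simp
    also have "\<dots> = (\<lambda>y. 2^n *\<^sub>R y) -` ?S \<inter> space lebesgue"
      by (auto simp: image_iff field_simps intro!: bexI[where x="2^n * _"])
    also have "\<dots> \<in> sets lebesgue"
      by (rule measurable_sets[OF lebesgue_measurable_scaling]) (use meas in auto)
    finally have ms: "(\<lambda>y. (1/2^n) *\<^sub>R y + 0) ` ?S \<in> sets lebesgue" .
    have "(\<lambda>y. (1/2^n) *\<^sub>R y + 0) ` ?S \<subseteq> {of_int j / 2^n..<(of_int j + 1)/2^n}"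
      by (auto simp: field_simps)
    then show ?thesis using ms by (intro fmeasurableI2[OF lm_Ico]) auto
  qed
  have "measure lebesgue (X \<inter> {of_int j / 2^n..<(of_int j + 1) / 2^n})
     \<le> measure lebesgue ((\<lambda>y. (1/2^n) *\<^sub>R y + 0) ` ?S)"
    by (rule measure_mono_fmeasurable[OF sub]) (use lm XI_lm in auto)
  also have "\<dots> = c / 2^n"
    using measure_lebesgue_affine[of "1/2^n" 0 ?S] unfolding unit_int by simp
  finally show ?thesis .
qed

lemma split3: assumes "a \<le> b" "b \<le> d"
  shows "measure lebesgue (X \<inter> {a..<d}) = measure lebesgue (X \<inter> {a..<b}) + measure lebesgue (X \<inter> {b..<d})"
proof -
  have eq: "X \<inter> {a..<d} = (X \<inter> {a..<b}) \<union> (X \<inter> {b..<d})" using assms by auto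
  show ?thesis unfolding eq
    by (intro measure_Union) (use XI_lm[of a b] XI_lm[of b d] in \<open>auto simp: fmeasurable_def simp del: emeasure_completion\<close>)
qed

lemma dy_eq: "measure lebesgue (X \<inter> {of_int j / 2^n..<(of_int j + 1) / 2^n}) = c / 2^n"
proof (induction n arbitrary: j)
  case 0
  then show ?case using unit_int by simp
next
  case (Suc n)
  define p where "p = j div 2"
  let ?a = "of_int (2*p) / 2^Suc n :: real" and ?b = "(of_int (2*p) + 1) / 2^Suc n :: real"
    and ?d = "(of_int (2*p+1) + 1) / 2^Suc n :: real"
  have e1: "?a = of_int p / 2^n" and e2: "?d = (of_int p + 1) / 2^n" and e3: "?b = of_int (2*p+1) / 2^Suc n"
    by (simp_all add: field_simps)
  have sp: "measure lebesgue (X \<inter> {?a..<?d}) = measure lebesgue (X \<inter> {?a..<?b}) + measure lebesgue (X \<inter> {?b..<?d})"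
    by (rule split3) (simp_all add: field_simps)
  have "measure lebesgue (X \<inter> {?a..<?d}) = c / 2^n" using Suc.IH[of p] unfolding e1 e2 .
  with sp have sum: "c / 2^n = measure lebesgue (X \<inter> {?a..<?b}) + measure lebesgue (X \<inter> {?b..<?d})" by simp
  moreover have le1: "measure lebesgue (X \<inter> {?a..<?b}) \<le> c / 2^Suc n"
    using dy_le[of "2*p" "Suc n"] by simp
  moreover have le2: "measure lebesgue (X \<inter> {?b..<?d}) \<le> c / 2^Suc n"
    using dy_le[of "2*p+1" "Suc n"] unfolding e3 by simp
  ultimately have r1: "measure lebesgue (X \<inter> {?a..<?b}) = c / 2^Suc n"
    and r2: "measure lebesgue (X \<inter> {?b..<?d}) = c / 2^Suc n" by simp_all
  have "j = 2*p \<or> j = 2*p+1" unfolding p_def by presburger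
  then show ?case
  proof
    assume "j = 2*p" then show ?thesis using r1 by simp
  next
    assume "j = 2*p+1" then show ?thesis using r2 unfolding e3 by simp
  qed
qed

lemma run_nat: "measure lebesgue (X \<inter> {of_int p / 2^n..<(of_int p + of_nat d) / 2^n}) = c * of_nat d / 2^n"
proof (induction d)
  case 0 then show ?case by simp
next
  case (Suc d)
  have "measure lebesgue (X \<inter> {of_int p / 2^n..<(of_int p + of_nat (Suc d)) / 2^n})
     = measure lebesgue (X \<inter> {of_int p / 2^n..<(of_int p + of_nat d) / 2^n})
     + measure lebesgue (X \<inter> {(of_int p + of_nat d) / 2^n..<(of_int p + of_nat (Suc d)) / 2^n})"
    by (rule split3) (simp_all add: field_simps)
  also have "measure lebesgue (X \<inter> {(of_int p + of_nat d) / 2^n..<(of_int p + of_nat (Suc d)) / 2^n}) = c / 2^n"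
    using dy_eq[of "p + int d" n] by (simp add: ac_simps)
  finally show ?case using Suc.IH by (simp add: field_simps)
qed

lemma run_int: assumes "P \<le> Q"
  shows "measure lebesgue (X \<inter> {of_int P / 2^n..<of_int Q / 2^n}) = c * of_int (Q - P) / 2^n"
  using run_nat[of P n "nat (Q - P)"] assms by simp

lemma open_int: assumes "a < b"
  shows "measure lebesgue (X \<inter> {a<..<b}) = c * (b - a)"
proof -
  have ms: "X \<inter> {a<..<b} \<in> sets lebesgue" by (intro sets.Int meas sets_completionI_sets) simp
  have fm: "X \<inter> {a<..<b} \<in> lmeasurable"
    by (rule fmeasurableI2[OF XI_lm[of a b]]) (use ms in auto)
  have bnd: "\<bar>measure lebesgue (X \<inter> {a<..<b}) - c * (b - a)\<bar> \<le> 2 / 2^n" for n :: nat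
  proof -
    define N :: real where "N = 2^n"
    have N: "N \<ge> 1" unfolding N_def by simp
    define P where "P = floor (a * N)"
    define Q where "Q = ceiling (b * N)"
    have PQ: "of_int P \<le> a * N" "a * N < of_int P + 1" "b * N \<le> of_int Q" "of_int Q < b * N + 1"
      unfolding P_def Q_def by linarith+
    have "a * N < b * N" using assms N by simp
    then have PleQ: "P \<le> Q" using PQ by linarith
    have sub1: "X \<inter> {a<..<b} \<subseteq> X \<inter> {of_int P / N..<of_int Q / N}"
    proof
      fix x assume x: "x \<in> X \<inter> {a<..<b}"
      have "a*N < x*N" "x*N < b*N" using x N by auto
      then have "of_int P \<le> x*N" "x*N < of_int Q" using PQ by linarith+
      then have "of_int P / N \<le> x" "x < of_int Q / N" using N by (simp_all add: pos_divide_le_eq pos_less_divide_eq)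
      with x show "x \<in> X \<inter> {of_int P / N..<of_int Q / N}" by auto
    qed
    have up: "measure lebesgue (X \<inter> {a<..<b}) \<le> c * of_int (Q - P) / N"
      using measure_mono_fmeasurable[OF sub1 ms XI_lm] run_int[OF PleQ, of n] unfolding N_def by simp
    have "c * of_int (Q - P) \<le> c * ((b - a) * N + 2)"
      using PQ c_le by (intro mult_left_mono) (auto simp: algebra_simps)
    then have up2: "measure lebesgue (X \<inter> {a<..<b}) \<le> c * (b - a) + 2 * c / N"
      using up N by (simp add: field_simps)
    have lo2: "c * (b - a) - 2 * c / N \<le> measure lebesgue (X \<inter> {a<..<b})"
    proof (cases "P + 1 \<le> Q - 1")
      case True
      have sub2: "X \<inter> {of_int (P+1) / N..<of_int (Q-1) / N} \<subseteq> X \<inter> {a<..<b}"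
      proof
        fix x assume x: "x \<in> X \<inter> {of_int (P+1) / N..<of_int (Q-1) / N}"
        then have "of_int (P+1) \<le> x * N" "x * N < of_int (Q-1)" using N by (auto simp: field_simps)
        then have "a*N < x*N" "x*N < b*N" using PQ by auto
        then have "a < x" "x < b" using N by auto
        with x show "x \<in> X \<inter> {a<..<b}" by auto
      qed
      have "measure lebesgue (X \<inter> {a<..<b}) \<ge> c * of_int ((Q-1) - (P+1)) / N"
        using measure_mono_fmeasurable[OF sub2 fmeasurableD[OF XI_lm] fm] run_int[OF True, of n]
        unfolding N_def by auto
      moreover have "c * of_int ((Q-1) - (P+1)) \<ge> c * ((b - a) * N - 2)"
        using PQ c_le by (intro mult_left_mono) (auto simp: algebra_simps)
      ultimately show ?thesis using N by (simp add: field_simps)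
    next
      case False
      then have "(b - a) * N - 2 \<le> 0" using PQ by (simp add: algebra_simps)
      then have "c * ((b - a) * N - 2) \<le> 0" using c_le by (simp add: mult_nonneg_nonpos)
      then have "c * (b - a) - 2 * c / N \<le> 0" using N by (simp add: field_simps)
      then show ?thesis using measure_nonneg[of lebesgue "X \<inter> {a<..<b}"] by linarith
    qed
    have "2 * c / N \<le> 2 / N" using c_le N by (simp add: divide_right_mono)
    then show ?thesis using up2 lo2 unfolding N_def by linarith
  qed
  show ?thesis
  proof (rule ccontr)
    assume "measure lebesgue (X \<inter> {a<..<b}) \<noteq> c * (b - a)"
    then have e: "\<bar>measure lebesgue (X \<inter> {a<..<b}) - c * (b - a)\<bar> > 0" by simp
    obtain n where "2 / \<bar>measure lebesgue (X \<inter> {a<..<b}) - c * (b - a)\<bar> < 2 ^ n"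
      using real_arch_pow[of 2] by auto
    then have "2 / 2^n < \<bar>measure lebesgue (X \<inter> {a<..<b}) - c * (b - a)\<bar>"
      using e by (simp add: field_simps)
    with bnd[of n] show False by simp
  qed
qed

lemma XO_lm: "X \<inter> {a<..<b} \<in> lmeasurable"
proof -
  have ms: "X \<inter> {a<..<b} \<in> sets lebesgue" by (intro sets.Int meas sets_completionI_sets) simp
  show ?thesis by (rule fmeasurableI2[OF XI_lm[of a b]]) (use ms in auto)
qed

lemma emeas_open: "l \<le> u \<Longrightarrow> emeasure lebesgue (X \<inter> {l<..<u}) = ennreal (c * (u - l))"
proof (cases "l = u")
  case True then show ?thesis by simp
next
  case False
  assume "l \<le> u" with False have "l < u" by simp
  then show ?thesis using emeasure_eq_measure2[OF XO_lm[of l u]] open_int by simp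
qed

definition M where "M = distr (density lebesgue (indicator X)) borel id"

lemma sets_M: "sets M = sets borel" unfolding M_def by simp

lemma emeasure_M: assumes "A \<in> sets borel" shows "emeasure M A = emeasure lebesgue (X \<inter> A)"
proof -
  have A': "A \<in> sets lebesgue" using assms by (intro sets_completionI_sets) simp
  have "emeasure M A = emeasure (density lebesgue (indicator X)) A"
    unfolding M_def using assms A' by (subst emeasure_distr) (auto simp: id_borel_measurable_lebesgue)
  also have "\<dots> = (\<integral>\<^sup>+x. indicator X x * indicator A x \<partial>lebesgue)"
    using A' meas by (subst emeasure_density) (auto simp: mult.commute)
  also have "\<dots> = (\<integral>\<^sup>+x. indicator (X \<inter> A) x \<partial>lebesgue)"
    by (simp add: indicator_inter_arith)
  also have "\<dots> = emeasure lebesgue (X \<inter> A)"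
    using A' meas by (intro nn_integral_indicator) auto
  finally show ?thesis .
qed

lemma final: "emeasure lebesgue X = 0 \<or> emeasure lebesgue (UNIV - X) = 0"
proof (cases "c = 0")
  case True
  have eqU: "X = (\<Union>n::nat. X \<inter> {-(real n)<..<real n})"
  proof (rule set_eqI, rule iffI)
    fix x assume x: "x \<in> X"
    obtain n::nat where "\<bar>x\<bar> < real n" using reals_Archimedean2 by blast
    with x have "x \<in> X \<inter> {-(real n)<..<real n}" by auto
    then show "x \<in> (\<Union>n::nat. X \<inter> {-(real n)<..<real n})" by blast
  qed auto
  have "X \<inter> {-(real n)<..<real n} \<in> null_sets lebesgue" for n :: nat
  proof -
    have "emeasure lebesgue (X \<inter> {-(real n)<..<real n}) = 0"
      using emeas_open[of "-(real n)" "real n"] True by simp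
    then show ?thesis using XO_lm by (auto simp: null_sets_def fmeasurableD)
  qed
  then have "(\<Union>n::nat. X \<inter> {-(real n)<..<real n}) \<in> null_sets lebesgue" by (intro null_sets_UN) auto
  then have "X \<in> null_sets lebesgue" using eqU by simp
  then show ?thesis by auto
next
  case False
  then have cpos: "c > 0" using c_le by simp
  define M' where "M' = density M (\<lambda>_. ennreal (1/c))"
  have lb: "lborel = M'"
  proof (rule lborel_eqI)
    fix l u :: real assume "\<And>b. b \<in> Basis \<Longrightarrow> l \<bullet> b \<le> u \<bullet> b"
    then have lu: "l \<le> u" by simp
    have "emeasure M' (box l u) = ennreal (1/c) * emeasure M {l<..<u}"
      unfolding M'_def by (subst emeasure_density_const) (auto simp: sets_M)
    also have "\<dots> = ennreal (1/c) * ennreal (c * (u - l))"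
      by (subst emeasure_M) (auto simp: emeas_open[OF lu])
    also have "\<dots> = ennreal (u - l)"
      using cpos lu by (simp add: ennreal_mult'[symmetric])
    finally show "emeasure M' (box l u) = (\<Prod>b\<in>Basis. (u - l) \<bullet> b)" by simp
  next
    show "sets M' = sets borel" unfolding M'_def by (simp add: sets_M)
  qed
  have Z: "UNIV - X \<in> sets lebesgue" using meas by auto
  then obtain S N N' where SN: "UNIV - X = S \<union> N" "N \<subseteq> N'" "N' \<in> null_sets lborel" "S \<in> sets lborel"
    by (rule sets_completionE)
  have "emeasure lborel S = emeasure M' S" by (simp only: lb)
  also have "\<dots> = ennreal (1/c) * emeasure lebesgue (X \<inter> S)"
    unfolding M'_def using SN(4) by (subst emeasure_density_const) (auto simp: sets_M emeasure_M)
  also have "X \<inter> S = {}" using SN(1) by auto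
  finally have e0: "emeasure lborel S = 0" by simp
  have "S \<in> null_sets lborel" using e0 SN(4) by (rule null_setsI)
  then have SN': "S \<union> N' \<in> null_sets lborel" using SN(3) by (rule null_sets.Un)
  have "UNIV - X \<subseteq> S \<union> N'" using SN(1,2) by auto
  then have "UNIV - X \<in> null_sets lebesgue"
    by (rule null_sets_completion_subset) (rule null_sets_completionI[OF SN'])
  then show ?thesis by (simp add: null_setsD1)
qed

end

theorem lemma2:
  fixes X :: "real set"
  assumes "X \<in> sets lebesgue"
    and "\<And>x. x \<in> X \<longleftrightarrow> x + 1 \<in> X"
    and "\<And>(k::int) x. x \<in> X \<Longrightarrow> of_int k * x \<in> X"
  shows "emeasure lebesgue X = 0 \<or> emeasure lebesgue (UNIV - X) = 0"
proof -
  interpret L2 X by unfold_locales (use assms in auto)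
  show ?thesis by (rule final)
qed

end
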